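(* For every constant $c>0$ there is a constant $c'>0$ such that the following holds. Let $G$ be a finite simple graph with maximum degree $d\ge 1$, and let $D(G)$ be a straight-line drawing of $G$ in the base plane $\mathcal{P}_1=\{z=0\}\subset\mathbb{R}^3$ with distinct vertex positions and angular resolution at least $c/d$ (i.e., any two distinct edges incident to a common vertex form an angle at least $c/d$ in $D(G)$). Then there is a 3D arc diagram drawing of $G$ with base plane $\mathcal{P}_1$ and with the same vertex positions as $D(G)$ (so every arc projects perpendicularly onto the corresponding straight-line edge of $D(G)$) whose angular resolution is at least $c'/\sqrt{d}$.
   Context: A 3D arc diagram drawing of $G$ with base plane $\mathcal{P}_1=\{z=0\}$ is a placement of the vertices at distinct points of $\mathcal{P}_1$, together with, for each edge $e=(a,b)$, a circular arc (a contiguous subset of a circle; a straight segment is allowed as the degenerate case) with endpoints at the positions of $a$ and $b$, such that: the arc lies in the plane $\mathcal{P}_2$ containing the segment $ab$ and perpendicular to $\mathcal{P}_1$ (so the arc projects perpendicularly onto the segment $ab$ in $\mathcal{P}_1$); all arcs lie in the closed half-space $z\ge 0$; and the arc forms the same angle $\alpha_e\in[0,\pi/2]$ with the segment $ab$ at both of its endpoints. The angle between two arcs incident to a common vertex $v$ is the angle in $[0,\pi]$ between their tangent rays at $v$ (directed into the arcs). The angular resolution of the drawing is the minimum of this angle over all vertices $v$ and all pairs of distinct edges incident to $v$. The angular resolution of a 2D straight-line drawing is defined analogously using the segments themselves. *)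

theory Defs
  imports "HOL-Analysis.Analysis"
begin

definition vec_angle :: "real^3 \<Rightarrow> real^3 \<Rightarrow> real" where
  "vec_angle x y = arccos ((x \<bullet> y) / (norm x * norm y))"

definition simple_graph :: "nat set \<Rightarrow> (nat \<Rightarrow> nat \<Rightarrow> bool) \<Rightarrow> bool" where
  "simple_graph V E \<longleftrightarrow> finite V \<and> (\<forall>u w. E u w \<longrightarrow> u \<in> V \<and> w \<in> V \<and> u \<noteq> w \<and> E w u)"

definition degree :: "nat set \<Rightarrow> (nat \<Rightarrow> nat \<Rightarrow> bool) \<Rightarrow> nat \<Rightarrow> nat" where
  "degree V E v = card {u \<in> V. E v u}"

definition max_degree :: "nat set \<Rightarrow> (nat \<Rightarrow> nat \<Rightarrow> bool) \<Rightarrow> nat" where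
  "max_degree V E = Max (degree V E ` V)"

definition in_base_plane :: "real^3 \<Rightarrow> bool" where
  "in_base_plane x \<longleftrightarrow> x $ 3 = 0"

definition ez :: "real^3" where
  "ez = axis 3 1"

definition straight_ang_res_ge ::
  "nat set \<Rightarrow> (nat \<Rightarrow> nat \<Rightarrow> bool) \<Rightarrow> (nat \<Rightarrow> real^3) \<Rightarrow> real \<Rightarrow> bool" where
  "straight_ang_res_ge V E p r \<longleftrightarrow>
     (\<forall>v\<in>V. \<forall>u w. E v u \<and> E v w \<and> u \<noteq> w \<longrightarrow>
        vec_angle (p u - p v) (p w - p v) \<ge> r)"

(* The circular arc of edge (a,b) with endpoint angle al in [0,pi/2]:
   it lies in the vertical plane through a b, in z >= 0, and meets the
   chord ab at angle al at both ends.
   For 0 < al <= pi/2 it is the minor arc of the circle of radius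
   R = |b-a|/(2 sin al) centred at m - R cos al ez (m = midpoint). *)
definition arc_curve :: "real^3 \<Rightarrow> real^3 \<Rightarrow> real \<Rightarrow> real \<Rightarrow> real^3" where
  "arc_curve a b al t =
     (if al = 0 then a + t *\<^sub>R (b - a)
      else (let L = norm (b - a); u = (1 / L) *\<^sub>R (b - a);
                R = L / (2 * sin al); m = (1/2) *\<^sub>R (a + b);
                th = (2 * t - 1) * al
            in m + (R * sin th) *\<^sub>R u + (R * (cos th - cos al)) *\<^sub>R ez))"

(* Unit tangent ray at endpoint a, directed into the arc of edge (a,b)
   with endpoint angle al: it makes angle al with the segment ab and lies
   in the vertical plane through a b, pointing upward. *)
definition arc_tangent :: "real^3 \<Rightarrow> real^3 \<Rightarrow> real \<Rightarrow> real^3" where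
  "arc_tangent a b al =
     (cos al / norm (b - a)) *\<^sub>R (b - a) + sin al *\<^sub>R ez"

(* A 3D arc diagram drawing with base plane P1, vertex positions p, and
   endpoint angles al (al u w = al w u for edge {u,w}) has angular
   resolution at least r. *)
definition arc_diagram :: "(nat \<Rightarrow> nat \<Rightarrow> bool) \<Rightarrow> (nat \<Rightarrow> nat \<Rightarrow> real) \<Rightarrow> bool" where
  "arc_diagram E al \<longleftrightarrow>
     (\<forall>u w. E u w \<longrightarrow> al u w = al w u \<and> 0 \<le> al u w \<and> al u w \<le> pi / 2)"

definition arc_ang_res_ge ::
  "nat set \<Rightarrow> (nat \<Rightarrow> nat \<Rightarrow> bool) \<Rightarrow> (nat \<Rightarrow> real^3) \<Rightarrow> (nat \<Rightarrow> nat \<Rightarrow> real) \<Rightarrow> real \<Rightarrow> bool" where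
  "arc_ang_res_ge V E p al r \<longleftrightarrow>
     (\<forall>v\<in>V. \<forall>u w. E v u \<and> E v w \<and> u \<noteq> w \<longrightarrow>
        vec_angle (arc_tangent (p v) (p u) (al v u))
                  (arc_tangent (p v) (p w) (al v w)) \<ge> r)"

end

theory Submission
  imports Defs
begin


lemma sin_ge_half: fixes x::real assumes "0 \<le> x" "x \<le> pi/3" shows "x/2 \<le> sin x"
proof (cases "x = 0")
  case True then show ?thesis by simp
next
  case False
  then have "0 < x" using assms by simp
  from MVT2[OF this DERIV_sin] obtain z where z: "0 < z" "z < x" "sin x - sin 0 = (x - 0) * cos z" by blast
  have "cos (pi/3) \<le> cos z" using z assms by (intro cos_monotone_0_pi_le) auto
  then have "1/2 \<le> cos z" by (simp add: cos_60)
  then have "x * (1/2) \<le> x * cos z" using \<open>0<x\<close> by (intro mult_left_mono) auto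
  then show ?thesis using z by simp
qed

lemma one_minus_cos_le: fixes r::real shows "1 - r^2/2 \<le> cos r"
proof -
  have "cos r = cos (2*(r/2))" by simp
  also have "\<dots> = 1 - 2 * sin (r/2) ^ 2" by (rule cos_double_sin)
  finally have e: "cos r = 1 - 2 * sin (r/2) ^ 2" .
  have "\<bar>sin (r/2)\<bar> \<le> \<bar>r/2\<bar>" by (rule abs_sin_x_le_abs_x)
  then have "sin (r/2) ^ 2 \<le> (r/2)^2" by (metis power2_abs power_mono abs_ge_zero)
  then show ?thesis using e by (simp add: power_divide)
qed

lemma one_minus_cos_ge: fixes x::real assumes "0 \<le> x" "x \<le> pi/2" shows "x^2/8 \<le> 1 - cos x"
proof -
  have "cos x = cos (2*(x/2))" by simp
  also have "\<dots> = 1 - 2 * sin (x/2) ^ 2" by (rule cos_double_sin)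
  finally have e: "cos x = 1 - 2 * sin (x/2) ^ 2" .
  have "x/4 \<le> sin (x/2)" using sin_ge_half[of "x/2"] assms by auto
  then have "(x/4)^2 \<le> sin (x/2) ^ 2" using assms by (intro power_mono) auto
  then show ?thesis using e by (simp add: power_divide)
qed

lemma frac_sep: fixes x y t :: real and m :: int
  assumes "x - y = of_int m + t" "\<bar>t\<bar> \<le> 1/2"
  shows "\<bar>t\<bar> \<le> \<bar>frac x - frac y\<bar>"
proof -
  define k where "k = m - \<lfloor>x\<rfloor> + \<lfloor>y\<rfloor>"
  have e: "frac x - frac y = t + of_int k" using assms(1) by (simp add: frac_def k_def)
  have b: "\<bar>frac x - frac y\<bar> < 1" using frac_lt_1[of x] frac_lt_1[of y] frac_ge_0[of x] frac_ge_0[of y] by linarith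
  show ?thesis
  proof (cases "k = 0")
    case True then show ?thesis using e by simp
  next
    case False
    then have "1 \<le> \<bar>real_of_int k\<bar>" by linarith
    then show ?thesis using e assms(2) by linarith
  qed
qed



definition cpx :: "real^3 \<Rightarrow> complex" where "cpx a = Complex (a$1) (a$2)"

lemma inner3: "(a::real^3) \<bullet> b = a$1*b$1 + a$2*b$2 + a$3*b$3"
  by (simp add: inner_vec_def sum_3)

lemma norm_cpx: assumes "a$3 = 0" shows "norm a = cmod (cpx a)"
  proof -
  have "cmod (cpx a) = sqrt ((a$1)^2 + (a$2)^2)" by (simp add: cpx_def cmod_def)
  then show ?thesis using assms by (simp add: norm_eq_sqrt_inner inner3 power2_eq_square)
qed

lemma cpx_nz: assumes "a$3 = 0" "a \<noteq> 0" shows "cpx a \<noteq> 0"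
  using assms norm_cpx[OF assms(1)] by auto

lemma cpx_minus: "cpx (-a) = - cpx a" by (simp add: cpx_def complex_eq_iff)

lemma re_arg: "z \<noteq> 0 \<Longrightarrow> cmod z * cos (Arg z) = Re z"
  by (metis Re_exp exp_Ln norm_exp_eq_Re Arg_def)
lemma im_arg: "z \<noteq> 0 \<Longrightarrow> cmod z * sin (Arg z) = Im z"
  by (metis Im_exp exp_Ln norm_exp_eq_Re Arg_def)

lemma inner_cos: assumes "a$3 = 0" "b$3 = 0" "a \<noteq> 0" "b \<noteq> 0"
  shows "a \<bullet> b / (norm a * norm b) = cos (Arg (cpx a) - Arg (cpx b))"
proof -
  have za: "cpx a \<noteq> 0" and zb: "cpx b \<noteq> 0" using cpx_nz assms by auto
  have "a \<bullet> b = Re (cpx a) * Re (cpx b) + Im (cpx a) * Im (cpx b)"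
    using assms by (simp add: inner3 cpx_def)
  also have "\<dots> = (cmod (cpx a) * cos (Arg (cpx a))) * (cmod (cpx b) * cos (Arg (cpx b)))
      + (cmod (cpx a) * sin (Arg (cpx a))) * (cmod (cpx b) * sin (Arg (cpx b)))"
    using re_arg[OF za] re_arg[OF zb] im_arg[OF za] im_arg[OF zb] by simp
  also have "\<dots> = cmod (cpx a) * cmod (cpx b) * cos (Arg (cpx a) - Arg (cpx b))"
    by (simp add: cos_diff algebra_simps)
  finally show ?thesis using norm_cpx[OF assms(1)] norm_cpx[OF assms(2)] za zb by simp
qed

lemma ez_inner: "a \<bullet> ez = a$3" "ez \<bullet> a = a$3" "ez \<bullet> ez = 1"
  by (simp_all add: ez_def inner_axis inner_axis')

lemma ez3: "ez$3 = 1" by (simp add: ez_def)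

lemma tan_inner: assumes "a$3 = 0" "b$3 = 0" "a \<noteq> 0" "b \<noteq> 0"
  shows "((cos x / norm a) *\<^sub>R a + sin x *\<^sub>R ez) \<bullet> ((cos y / norm b) *\<^sub>R b + sin y *\<^sub>R ez)
     = cos x * cos y * (a \<bullet> b / (norm a * norm b)) + sin x * sin y"
  using assms by (simp add: inner_add_left inner_add_right ez_inner ez3 field_simps)

lemma tan_norm: assumes "a$3 = 0" "a \<noteq> 0"
  shows "norm ((cos x / norm a) *\<^sub>R a + sin x *\<^sub>R ez) = 1"
proof -
  have "((cos x / norm a) *\<^sub>R a + sin x *\<^sub>R ez) \<bullet> ((cos x / norm a) *\<^sub>R a + sin x *\<^sub>R ez) = 1"
    using tan_inner[OF assms(1) assms(1) assms(2) assms(2), of x x] assms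
    by (simp add: dot_square_norm power2_eq_square[symmetric])
  then show ?thesis by (simp add: norm_eq_sqrt_inner)
qed



lemma delta_cases: fixes A B :: real
  assumes "-pi < A" "A \<le> pi" "-pi < B" "B \<le> pi"
  shows "\<exists>k::int. A - B = 2*pi*k + arccos (cos (A - B)) \<or> A - B = 2*pi*k - arccos (cos (A - B))"
proof -
  define de where "de = A - B"
  have r: "-2*pi < de" "de < 2*pi" using assms unfolding de_def by auto
  consider "0 \<le> de \<and> de \<le> pi" | "-pi \<le> de \<and> de < 0" | "pi < de" | "de < -pi" by linarith
  then have "\<exists>k::int. de = 2*pi*k + arccos (cos de) \<or> de = 2*pi*k - arccos (cos de)"
  proof cases
    case 1 then show ?thesis using arccos_cos[of de] by (intro exI[of _ 0]) auto
  next
    case 2 then show ?thesis using arccos_cos2[of de] by (intro exI[of _ 0]) auto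
  next
    case 3
    have "cos de = cos (de - 2*pi)" by (simp add: cos_diff)
    moreover have "arccos (cos (de - 2*pi)) = -(de - 2*pi)" using 3 r by (intro arccos_cos2) auto
    ultimately show ?thesis by (intro exI[of _ 1]) auto
  next
    case 4
    have "cos de = cos (de + 2*pi)" by (simp add: cos_add)
    moreover have "arccos (cos (de + 2*pi)) = de + 2*pi" using 4 r by (intro arccos_cos) auto
    ultimately show ?thesis by (intro exI[of _ "-1"]) auto
  qed
  then show ?thesis unfolding de_def .
qed

lemma key_alg: fixes ca cb sa sb ct :: real
  assumes "ca^2 = 1 - sa^2" "cb^2 = 1 - sb^2"
  shows "ca*cb*(1 - ct) + (sa - sb)^2/2 \<le> 1 - (ca*cb*ct + sa * sb)"
proof -
  have "1 - (ca*cb*ct + sa * sb) - (ca*cb*(1 - ct) + (sa - sb)^2/2) = (ca - cb)^2/2"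
    using assms by (simp add: power2_eq_square field_simps)
  then show ?thesis by (smt (verit) zero_le_power2 divide_nonneg_pos)
qed



definition sval :: "nat \<Rightarrow> real^3 \<Rightarrow> real" where
  "sval N a = frac (real N * Arg (cpx a) / pi) / 2"

lemma sval_bounds: "0 \<le> sval N a" "sval N a < 1/2"
  using frac_ge_0 frac_lt_1 unfolding sval_def by (auto simp: frac_lt_1)

lemma half_abs: "2 * \<bar>(x::real)/2 - y/2\<bar> = \<bar>x - y\<bar>"
  by (simp add: diff_divide_distrib[symmetric])

lemma pair_bound:
  fixes N d :: nat and c :: real and a b :: "real^3"
  assumes a3: "a$3 = 0" and b3: "b$3 = 0" and anz: "a \<noteq> 0" and bnz: "b \<noteq> 0"
    and N1: "N \<ge> 1" and Nge: "sqrt (real d) \<le> real N" and Nle: "real N \<le> 2 * sqrt (real d)"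
    and d1: "d \<ge> 1" and c0: "c > 0"
    and hyp: "c / real d \<le> vec_angle a b"
  shows "min (1/4) (c/(2*pi)) / sqrt (real d) \<le>
     vec_angle ((cos (arcsin (sval N a)) / norm a) *\<^sub>R a + sin (arcsin (sval N a)) *\<^sub>R ez)
               ((cos (arcsin (sval N b)) / norm b) *\<^sub>R b + sin (arcsin (sval N b)) *\<^sub>R ez)"
proof -
  define sa where "sa = sval N a"
  define sb where "sb = sval N b"
  define ca where "ca = sqrt (1 - sa^2)"
  define cb where "cb = sqrt (1 - sb^2)"
  define c' where "c' = min (1/4) (c/(2*pi))"
  define r where "r = c' / sqrt (real d)"
  have sab: "0 \<le> sa" "sa < 1/2" "0 \<le> sb" "sb < 1/2" using sval_bounds unfolding sa_def sb_def by auto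
  have sin_a: "sin (arcsin sa) = sa" and sin_b: "sin (arcsin sb) = sb" using sab by auto
  have cos_a: "cos (arcsin sa) = ca" and cos_b: "cos (arcsin sb) = cb"
    using sab unfolding ca_def cb_def by (auto intro!: cos_arcsin)
  have sa2: "sa^2 \<le> 1/4" "sb^2 \<le> 1/4" proof -
    have "sa^2 \<le> (1/2)^2" "sb^2 \<le> (1/2)^2" using sab by (intro power_mono; simp)+
    then show "sa^2 \<le> 1/4" "sb^2 \<le> 1/4" by (simp_all add: power2_eq_square)
  qed
  have s1: "sa^2 \<le> 1" "sb^2 \<le> 1" using sa2 by linarith+
  have s1': "0 \<le> 1 - sa^2" "0 \<le> 1 - sb^2" using s1 by linarith+
  have ca2: "ca^2 = 1 - sa^2" "cb^2 = 1 - sb^2" unfolding ca_def cb_def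
    using real_sqrt_pow2[OF s1'(1)] real_sqrt_pow2[OF s1'(2)] by blast+
  have cab0: "0 \<le> ca" "0 \<le> cb" unfolding ca_def cb_def
    using real_sqrt_ge_zero[OF s1'(1)] real_sqrt_ge_zero[OF s1'(2)] by blast+
  have n916: "(3/4::real)^2 = 9/16" by (simp add: power2_eq_square)
  have p2: "(3/4)^2 \<le> ca^2" "(3/4)^2 \<le> cb^2" using ca2 sa2 n916 by linarith+
  have ca34: "3/4 \<le> ca" "3/4 \<le> cb" using power2_le_imp_le[OF p2(1) cab0(1)] power2_le_imp_le[OF p2(2) cab0(2)] by blast+
  have cab: "9/16 \<le> ca * cb" using mult_mono[OF ca34] cab0 by linarith
  define A where "A = Arg (cpx a)"
  define B where "B = Arg (cpx b)"
  define th where "th = vec_angle a b"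
  have rho: "a \<bullet> b / (norm a * norm b) = cos (A - B)"
    unfolding A_def B_def by (rule inner_cos[OF a3 b3 anz bnz])
  have th_def': "th = arccos (cos (A - B))" unfolding th_def vec_angle_def rho ..
  have thb: "0 \<le> th" "th \<le> pi" unfolding th_def' using arccos_bounded[of "cos (A - B)"] by auto
  have costh: "cos th = cos (A - B)" unfolding th_def' by simp
  obtain k :: int where kk: "A - B = 2*pi*k + th \<or> A - B = 2*pi*k - th"
    using delta_cases[of A B] mpi_less_Arg Arg_le_pi unfolding A_def B_def th_def' by blast
  define D where "D = ca*cb*cos th + sa * sb"
  have key: "ca*cb*(1 - cos th) + (sa - sb)^2/2 \<le> 1 - D"
    unfolding D_def by (rule key_alg[OF ca2])
  have dpos: "0 < real d" "0 < sqrt (real d)" using d1 by auto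
  have Npos: "0 < real N" using N1 by auto
  have c'pos: "0 < c'" unfolding c'_def using c0 by auto
  have c'le: "c' \<le> 1/4" "c' \<le> c/(2*pi)" unfolding c'_def by auto
  have goal1: "c'^2 / (2 * real d) \<le> 1 - D"
  proof (cases "pi / (2 * real N) \<le> th")
    case True
    define eta where "eta = pi / (2 * real N)"
    have eta0: "0 \<le> eta" "eta \<le> pi/2" unfolding eta_def using N1 Npos by (auto simp: field_simps)
    have "cos th \<le> cos eta" using True thb eta0 unfolding eta_def by (intro cos_monotone_0_pi_le) auto
    then have "eta^2/8 \<le> 1 - cos th" using one_minus_cos_ge[OF eta0] by linarith
    moreover have "eta^2 = pi^2 / (4 * (real N)^2)" unfolding eta_def by (simp add: power_divide power_mult_distrib)
    moreover have "(real N)^2 \<le> 4 * real d"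
    proof -
      have "(real N)^2 \<le> (2 * sqrt (real d))^2" using Nle Npos by (intro power_mono) auto
      then show ?thesis using dpos by (simp add: power_mult_distrib)
    qed
    moreover have "9 \<le> pi^2"
    proof -
      have "3*3 \<le> pi*pi" by (rule mult_mono) (use pi_gt3 in auto)
      then show ?thesis by (simp add: power2_eq_square)
    qed
    moreover have "9 / (32 * (4 * real d)) \<le> pi^2 / (32 * (real N)^2)"
      by (rule frac_le) (use calculation Npos in auto)
    ultimately have "9 / (128 * real d) \<le> 1 - cos th" by simp
    then have "9/16 * (9 / (128 * real d)) \<le> ca * cb * (1 - cos th)"
      using cab by (intro mult_mono) auto
    moreover have "c'^2 / (2 * real d) \<le> 9/16 * (9 / (128 * real d))"
    proof -
      have "c'^2 \<le> (1/4)^2" using c'le c'pos by (intro power_mono) auto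
      then show ?thesis using dpos by (simp add: field_simps)
    qed
    moreover have "0 \<le> (sa - sb)^2/2" by simp
    ultimately show ?thesis using key by linarith
  next
    case False
    define t where "t = (if A - B = 2*pi*k + th then real N * th / pi else - (real N * th / pi))"
    have tabs: "\<bar>t\<bar> = real N * th / pi" unfolding t_def using thb Npos by auto
    have tle: "\<bar>t\<bar> \<le> 1/2" unfolding tabs using False Npos by (simp add: field_simps)
    have e1: "real N * A / pi - real N * B / pi = real N * (A - B) / pi"
      by (simp add: diff_divide_distrib right_diff_distrib)
    have "real N * (A - B) / pi = of_int (2 * int N * k) + t"
    proof (cases "A - B = 2*pi*k + th")
      case True
      then have "real N * (A - B) / pi = real N * (2*pi*k + th) / pi" by simp
      also have "\<dots> = of_int (2 * int N * k) + real N * th / pi" by (simp add: field_simps)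
      finally show ?thesis unfolding t_def using True by simp
    next
      case False
      then have F: "A - B = 2*pi*k - th" using kk by blast
      then have "real N * (A - B) / pi = real N * (2*pi*k - th) / pi" by simp
      also have "\<dots> = of_int (2 * int N * k) + - (real N * th / pi)" by (simp add: field_simps)
      finally show ?thesis unfolding t_def using False by simp
    qed
    then have "real N * A / pi - real N * B / pi = of_int (2 * int N * k) + t" using e1 by simp
    from frac_sep[OF this tle] have "real N * th / pi \<le> 2 * \<bar>sa - sb\<bar>"
      unfolding tabs sa_def sb_def sval_def A_def B_def by (simp add: half_abs)
    moreover have "real N * (c / real d) / pi \<le> real N * th / pi"
      using hyp Npos unfolding th_def by (intro divide_right_mono mult_left_mono) auto
    moreover have "c / (pi * sqrt (real d)) \<le> real N * (c / real d) / pi"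
    proof -
      have "real d = sqrt (real d) * sqrt (real d)" using dpos by simp
      then have "c / (pi * sqrt (real d)) = sqrt (real d) * (c / real d) / pi" using dpos
        by (simp add: field_simps)
      also have "\<dots> \<le> real N * (c / real d) / pi" using Nge c0 dpos
        by (intro divide_right_mono mult_right_mono) auto
      finally show ?thesis .
    qed
    ultimately have h0: "c / (pi * sqrt (real d)) \<le> 2 * \<bar>sa - sb\<bar>" by linarith
    have "c / (2 * pi * sqrt (real d)) = (c / (pi * sqrt (real d))) / 2" by simp
    also have "\<dots> \<le> (2 * \<bar>sa - sb\<bar>) / 2" using h0 by (rule divide_right_mono) simp
    finally have h: "c / (2 * pi * sqrt (real d)) \<le> \<bar>sa - sb\<bar>" by simp
    have "(c / (2 * pi * sqrt (real d)))^2 \<le> \<bar>sa - sb\<bar>^2"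
      using h c0 dpos by (intro power_mono) auto
    then have "c^2 / (4 * pi^2 * real d) \<le> (sa - sb)^2"
      using dpos by (simp add: power_divide power_mult_distrib)
    moreover have "c'^2 \<le> c^2 / (4 * pi^2)"
    proof -
      have "c'^2 \<le> (c/(2*pi))^2" using c'le c'pos by (intro power_mono) auto
      then show ?thesis by (simp add: power_divide power_mult_distrib)
    qed
    moreover have "c'^2 / real d \<le> (c^2 / (4 * pi^2)) / real d"
      using calculation(2) dpos by (intro divide_right_mono) auto
    ultimately have "c'^2 / real d \<le> (sa - sb)^2" by simp
    then have "c'^2 / (2 * real d) \<le> (sa - sb)^2 / 2" by simp
    moreover have "0 \<le> ca * cb * (1 - cos th)" using cab0 by simp
    ultimately show ?thesis using key by linarith
  qed
  have r2: "r^2 = c'^2 / real d" unfolding r_def using dpos by (simp add: power_divide)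
  have Dle: "D \<le> cos r" using goal1 one_minus_cos_le[of r] r2 by (simp add: field_simps)
  define Ta where "Ta = (ca / norm a) *\<^sub>R a + sa *\<^sub>R ez"
  define Tb where "Tb = (cb / norm b) *\<^sub>R b + sb *\<^sub>R ez"
  have TT: "Ta \<bullet> Tb = D" unfolding Ta_def Tb_def D_def
    using tan_inner[OF a3 b3 anz bnz, of "arcsin sa" "arcsin sb"] sin_a sin_b cos_a cos_b rho costh by simp
  have nTa: "norm Ta = 1" and nTb: "norm Tb = 1" unfolding Ta_def Tb_def
    using tan_norm[OF a3 anz, of "arcsin sa"] tan_norm[OF b3 bnz, of "arcsin sb"] sin_a sin_b cos_a cos_b by auto
  have "\<bar>D\<bar> \<le> 1" using Cauchy_Schwarz_ineq2[of Ta Tb] TT nTa nTb by simp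
  have r0: "0 \<le> r" "r \<le> pi" unfolding r_def using c'pos dpos c'le
  proof -
    have "1 \<le> sqrt (real d)" using d1 by simp
    then have "c' / sqrt (real d) \<le> c' / 1" using c'pos by (intro divide_left_mono) auto
    then show "0 \<le> c' / sqrt (real d)" "c' / sqrt (real d) \<le> pi" using c'pos dpos c'le pi_gt3 by auto
  qed
  have "r = arccos (cos r)" using r0 by (simp add: arccos_cos)
  also have "\<dots> \<le> arccos D" using Dle \<open>\<bar>D\<bar> \<le> 1\<close> by (intro arccos_le_arccos) auto
  also have "\<dots> = vec_angle Ta Tb" unfolding vec_angle_def TT nTa nTb by simp
  finally show ?thesis unfolding r_def c'_def Ta_def Tb_def sa_def sb_def
    using sin_a sin_b cos_a cos_b unfolding sa_def sb_def ca_def cb_def by simp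
qed



lemma sval_sym: assumes "x$3 = 0" "x \<noteq> 0" shows "sval N (-x) = sval N x"
proof -
  have z: "cpx x \<noteq> 0" using cpx_nz assms by auto
  have "Arg (cpx (-x)) = Arg (cpx x) + pi \<or> Arg (cpx (-x)) = Arg (cpx x) - pi"
    unfolding cpx_minus using Arg_minus[OF z] by auto
  then show ?thesis
  proof
    assume h: "Arg (cpx (-x)) = Arg (cpx x) + pi"
    have "real N * Arg (cpx (-x)) / pi = real N * Arg (cpx x) / pi + of_int (int N)"
      unfolding h by (simp add: field_simps)
    then show ?thesis unfolding sval_def by (simp add: frac_add_int_right)
  next
    assume h: "Arg (cpx (-x)) = Arg (cpx x) - pi"
    have "real N * Arg (cpx (-x)) / pi = real N * Arg (cpx x) / pi + of_int (- int N)"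
      unfolding h by (simp add: field_simps)
    then show ?thesis unfolding sval_def by (simp only: frac_add_of_int_right)
  qed
qed

theorem theorem4:
  "\<forall>c::real. c > 0 \<longrightarrow> (\<exists>c'::real. c' > 0 \<and>
     (\<forall>V E (p :: nat \<Rightarrow> real^3) (d :: nat).
        simple_graph V E \<longrightarrow> d = max_degree V E \<longrightarrow> d \<ge> 1 \<longrightarrow>
        (\<forall>v\<in>V. in_base_plane (p v)) \<longrightarrow> inj_on p V \<longrightarrow>
        straight_ang_res_ge V E p (c / real d) \<longrightarrow>
        (\<exists>al. arc_diagram E al \<and> arc_ang_res_ge V E p al (c' / sqrt (real d)))))"
proof (intro allI impI)
  fix c :: real assume c0: "c > 0"
  show "\<exists>c'::real. c' > 0 \<and>
     (\<forall>V E (p :: nat \<Rightarrow> real^3) (d :: nat).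
        simple_graph V E \<longrightarrow> d = max_degree V E \<longrightarrow> d \<ge> 1 \<longrightarrow>
        (\<forall>v\<in>V. in_base_plane (p v)) \<longrightarrow> inj_on p V \<longrightarrow>
        straight_ang_res_ge V E p (c / real d) \<longrightarrow>
        (\<exists>al. arc_diagram E al \<and> arc_ang_res_ge V E p al (c' / sqrt (real d))))"
  proof (intro exI[of _ "min (1/4) (c/(2*pi))"] conjI allI impI)
    show "0 < min (1/4) (c/(2*pi))" using c0 by simp
  next
    fix V E and p :: "nat \<Rightarrow> real^3" and d :: nat
    assume sg: "simple_graph V E" and dd: "d = max_degree V E" and d1: "d \<ge> 1"
      and pl: "\<forall>v\<in>V. in_base_plane (p v)" and inj: "inj_on p V"
      and hyp: "straight_ang_res_ge V E p (c / real d)"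
    define N where "N = nat \<lceil>sqrt (real d)\<rceil>"
    have sd1: "1 \<le> sqrt (real d)" using d1 by simp
    have RN: "real N = of_int \<lceil>sqrt (real d)\<rceil>" unfolding N_def using sd1 by simp
    have Nge: "sqrt (real d) \<le> real N" unfolding RN by simp
    have Nle: "real N \<le> 2 * sqrt (real d)" unfolding RN using sd1
      by (smt (verit) of_int_ceiling_le_add_one)
    have N1: "N \<ge> 1" using Nge sd1 by linarith
    have dir: "(p w - p u)$3 = 0 \<and> p w - p u \<noteq> 0" if "E u w" for u w
    proof -
      have "u \<in> V" "w \<in> V" "u \<noteq> w" using sg that unfolding simple_graph_def by auto
      then show ?thesis using pl inj unfolding in_base_plane_def inj_on_def by auto
    qed
    define al where "al u w = arcsin (sval N (p w - p u))" for u w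
    have "arc_diagram E al" unfolding arc_diagram_def
    proof (intro allI impI conjI)
      fix u w assume e: "E u w"
      have "p u - p w = - (p w - p u)" by simp
      then show "al u w = al w u" unfolding al_def using sval_sym[of "p w - p u" N] dir[OF e] by simp
      have b: "0 \<le> sval N (p w - p u)" "sval N (p w - p u) < 1/2" using sval_bounds by auto
      show "0 \<le> al u w" unfolding al_def using b by (simp add: arcsin_le_arcsin[of 0, simplified])
      show "al u w \<le> pi / 2" unfolding al_def using b arcsin_bounded[of "sval N (p w - p u)"] by auto
    qed
    moreover have "arc_ang_res_ge V E p al (min (1/4) (c/(2*pi)) / sqrt (real d))"
      unfolding arc_ang_res_ge_def
    proof (intro ballI allI impI)
      fix v u w assume v: "v \<in> V" and e: "E v u \<and> E v w \<and> u \<noteq> w"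
      have h: "c / real d \<le> vec_angle (p u - p v) (p w - p v)"
        using hyp v e unfolding straight_ang_res_ge_def by blast
      show "min (1/4) (c/(2*pi)) / sqrt (real d) \<le>
          vec_angle (arc_tangent (p v) (p u) (al v u)) (arc_tangent (p v) (p w) (al v w))"
        unfolding arc_tangent_def al_def
        using pair_bound[of "p u - p v" "p w - p v" N d c] dir e N1 Nge Nle d1 c0 h by blast
    qed
    ultimately show "\<exists>al. arc_diagram E al \<and> arc_ang_res_ge V E p al (min (1/4) (c/(2*pi)) / sqrt (real d))"
      by blast
  qed
qed


end
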